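(* Let $G$ and $H$ be convergence groups with $G$ $g$-barrelled, and let $L$ be a locally quasi-convex topological group. Then every separately continuous bihomomorphism $u:G\times H\to L$ is jointly continuous in each of the following cases: (i) $H$ is locally compact; (ii) $G$ and $H$ are first countable.
   Context: All groups are abelian. A convergence structure on a set $X$ assigns to each $x$ a collection of filters converging to $x$. This assignment must satisfy three conditions: point ultrafilters converge to their point; finite intersections of filters converging to $x$ converge to $x$; and finer filters of convergent filters converge. A map is continuous if it sends filters converging to $x$ to filters converging to the image of $x$. A convergence group is an abelian group with a convergence structure such that $\mathcal F\to x$, $\mathcal G\to y$ imply $\mathcal F-\mathcal G\to x-y$. Topological groups are convergence groups. $G\times H$ carries the product convergence structure, in which a filter converges iff its projections converge. A convergence space is Hausdorff if limits are unique. A subset $K$ is compact if every ultrafilter containing $K$ converges to a point of $K$. A convergence space is locally compact if it is Hausdorff and each convergent filter contains a compact set. A convergence space is first countable if for every filter $\mathcal F\to x$ there is a filter $\mathcal V\subseteq\mathcal F$ with a countable base such that $\mathcal V\to x$. $\mathbb T=\mathbb R/\mathbb Z$, $\mathbb T_+=\rho([-1/4,1/4])$ where $\rho:\mathbb R\to\mathbb T$ is the quotient map. $\Gamma G$ is the group of continuous homomorphisms $G\to\mathbb T$, and $\Gamma_s G$ is $\Gamma G$ with the topology of pointwise convergence. A set $M\subseteq\Gamma G$ is equicontinuous if for every filter $\mathcal F\to0$ in $G$, the filter generated by $\{\varphi(x):\varphi\in M,x\in F\}$, $F\in\mathcal F$, converges to $0$. $G$ is $g$-barrelled if every compact subset of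 $\Gamma_s G$ is equicontinuous. A subset $A$ of a topological group $L$ is quasi-convex if for every $x\notin A$ there is a continuous character $\varphi$ with $\varphi(A)\subseteq\mathbb T_+$, $\varphi(x)\notin\mathbb T_+$. $L$ is locally quasi-convex if it has a zero neighbourhood base of quasi-convex sets. A bihomomorphism is a map that is a homomorphism in each variable. It is separately continuous if it is continuous in each variable separately. *)

theory Defs
  imports "HOL-Analysis.Analysis"
begin

text \<open>Filters are Isabelle filters; F \<le> G means F is finer than G; the intersection of
  two filters (as families of sets) is sup F G; the improper filter is bot.\<close>

definition convergence :: "('a filter \<Rightarrow> 'a \<Rightarrow> bool) \<Rightarrow> bool" where
  "convergence conv \<longleftrightarrow>
     (\<forall>x. conv (principal {x}) x) \<and>
     (\<forall>F G x. conv F x \<and> conv G x \<longrightarrow> conv (sup F G) x) \<and>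
     (\<forall>F G x. conv F x \<and> G \<le> F \<longrightarrow> conv G x)"

definition conv_continuous ::
  "('a filter \<Rightarrow> 'a \<Rightarrow> bool) \<Rightarrow> ('b filter \<Rightarrow> 'b \<Rightarrow> bool) \<Rightarrow> ('a \<Rightarrow> 'b) \<Rightarrow> bool" where
  "conv_continuous convA convB f \<longleftrightarrow> (\<forall>F x. convA F x \<longrightarrow> convB (filtermap f F) (f x))"

definition top_conv :: "'a::topological_space filter \<Rightarrow> 'a \<Rightarrow> bool" where
  "top_conv F x \<longleftrightarrow> F \<le> nhds x"

definition prod_conv ::
  "('a filter \<Rightarrow> 'a \<Rightarrow> bool) \<Rightarrow> ('b filter \<Rightarrow> 'b \<Rightarrow> bool) \<Rightarrow> ('a \<times> 'b) filter \<Rightarrow> 'a \<times> 'b \<Rightarrow> bool" where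
  "prod_conv convA convB F p \<longleftrightarrow> convA (filtermap fst F) (fst p) \<and> convB (filtermap snd F) (snd p)"

text \<open>F - G is the filter generated by the sets A - B, A in F, B in G.\<close>
definition convergence_group :: "('a::ab_group_add filter \<Rightarrow> 'a \<Rightarrow> bool) \<Rightarrow> bool" where
  "convergence_group conv \<longleftrightarrow> convergence conv \<and>
     (\<forall>F G x y. conv F x \<and> conv G y \<longrightarrow>
        conv (filtermap (\<lambda>(a, b). a - b) (F \<times>\<^sub>F G)) (x - y))"

definition ultrafilter :: "'a filter \<Rightarrow> bool" where
  "ultrafilter U \<longleftrightarrow> U \<noteq> bot \<and> (\<forall>G. G \<le> U \<and> G \<noteq> bot \<longrightarrow> G = U)"

definition conv_hausdorff :: "('a filter \<Rightarrow> 'a \<Rightarrow> bool) \<Rightarrow> bool" where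
  "conv_hausdorff conv \<longleftrightarrow> (\<forall>F x y. F \<noteq> bot \<and> conv F x \<and> conv F y \<longrightarrow> x = y)"

definition conv_compact :: "('a filter \<Rightarrow> 'a \<Rightarrow> bool) \<Rightarrow> 'a set \<Rightarrow> bool" where
  "conv_compact conv K \<longleftrightarrow>
     (\<forall>U. ultrafilter U \<and> eventually (\<lambda>x. x \<in> K) U \<longrightarrow> (\<exists>x\<in>K. conv U x))"

definition conv_locally_compact :: "('a filter \<Rightarrow> 'a \<Rightarrow> bool) \<Rightarrow> bool" where
  "conv_locally_compact conv \<longleftrightarrow> conv_hausdorff conv \<and>
     (\<forall>F x. conv F x \<longrightarrow> (\<exists>K. conv_compact conv K \<and> eventually (\<lambda>y. y \<in> K) F))"

definition countable_base_filter :: "'a filter \<Rightarrow> bool" where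
  "countable_base_filter F \<longleftrightarrow>
     (\<exists>B :: 'a set set. countable B \<and> (\<forall>P. eventually P F \<longleftrightarrow> (\<exists>b\<in>B. \<forall>x\<in>b. P x)))"

text \<open>V \<subseteq> F (as set families) is F \<le> V.\<close>
definition conv_first_countable :: "('a filter \<Rightarrow> 'a \<Rightarrow> bool) \<Rightarrow> bool" where
  "conv_first_countable conv \<longleftrightarrow>
     (\<forall>F x. conv F x \<longrightarrow> (\<exists>V. F \<le> V \<and> countable_base_filter V \<and> conv V x))"

text \<open>The circle group T = R/Z is represented by the unit circle in the complex plane
  (a topologically isomorphic copy), via rho t = exp(2 pi i t); its zero is 1.\<close>
definition rho :: "real \<Rightarrow> complex" where
  "rho t = cis (2 * pi * t)"

definition Tcirc :: "complex set" where
  "Tcirc = rho ` UNIV"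

definition Tplus :: "complex set" where
  "Tplus = rho ` {-1/4..1/4}"

definition characters :: "('a::ab_group_add filter \<Rightarrow> 'a \<Rightarrow> bool) \<Rightarrow> ('a \<Rightarrow> complex) set" where
  "characters conv = {\<phi>. (\<forall>x. \<phi> x \<in> Tcirc) \<and> (\<forall>x y. \<phi> (x + y) = \<phi> x * \<phi> y) \<and>
                           conv_continuous conv top_conv \<phi>}"

definition equicontinuous :: "('a::ab_group_add filter \<Rightarrow> 'a \<Rightarrow> bool) \<Rightarrow> ('a \<Rightarrow> complex) set \<Rightarrow> bool" where
  "equicontinuous conv M \<longleftrightarrow>
     (\<forall>F. conv F 0 \<longrightarrow> filtermap (\<lambda>(\<phi>, x). \<phi> x) (principal M \<times>\<^sub>F F) \<le> nhds 1)"

text \<open>Compactness in Gamma_s G: the pointwise (product) topology on functions.\<close>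
definition g_barrelled :: "('a::ab_group_add filter \<Rightarrow> 'a \<Rightarrow> bool) \<Rightarrow> bool" where
  "g_barrelled conv \<longleftrightarrow>
     (\<forall>M. M \<subseteq> characters conv \<and> compact M \<longrightarrow> equicontinuous conv M)"

definition quasi_convex :: "'c::topological_ab_group_add set \<Rightarrow> bool" where
  "quasi_convex A \<longleftrightarrow>
     (\<forall>x. x \<notin> A \<longrightarrow> (\<exists>\<phi> \<in> characters top_conv. \<phi> ` A \<subseteq> Tplus \<and> \<phi> x \<notin> Tplus))"

definition locally_quasi_convex :: "'c::topological_ab_group_add itself \<Rightarrow> bool" where
  "locally_quasi_convex _ \<longleftrightarrow>
     (\<forall>U::'c set. open U \<and> 0 \<in> U \<longrightarrow>
        (\<exists>V W. open W \<and> 0 \<in> W \<and> W \<subseteq> V \<and> V \<subseteq> U \<and> quasi_convex V))"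

definition bihomomorphism :: "('a::ab_group_add \<Rightarrow> 'b::ab_group_add \<Rightarrow> 'c::ab_group_add) \<Rightarrow> bool" where
  "bihomomorphism u \<longleftrightarrow>
     (\<forall>x x' y. u (x + x') y = u x y + u x' y) \<and> (\<forall>x y y'. u x (y + y') = u x y + u x y')"

definition separately_continuous ::
  "('a filter \<Rightarrow> 'a \<Rightarrow> bool) \<Rightarrow> ('b filter \<Rightarrow> 'b \<Rightarrow> bool) \<Rightarrow> ('a \<Rightarrow> 'b \<Rightarrow> 'c::topological_space) \<Rightarrow> bool" where
  "separately_continuous convA convB u \<longleftrightarrow>
     (\<forall>y. conv_continuous convA top_conv (\<lambda>x. u x y)) \<and>
     (\<forall>x. conv_continuous convB top_conv (\<lambda>y. u x y))"

definition jointly_continuous ::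
  "('a filter \<Rightarrow> 'a \<Rightarrow> bool) \<Rightarrow> ('b filter \<Rightarrow> 'b \<Rightarrow> bool) \<Rightarrow> ('a \<Rightarrow> 'b \<Rightarrow> 'c::topological_space) \<Rightarrow> bool" where
  "jointly_continuous convA convB u \<longleftrightarrow>
     conv_continuous (prod_conv convA convB) top_conv (\<lambda>(x, y). u x y)"

end

theory Submission
  imports Defs
begin

lemma ultra_cases:
  assumes U: "ultrafilter U"
  shows "eventually P U \<or> eventually (\<lambda>x. \<not> P x) U"
proof (rule disjCI)
  assume n: "\<not> eventually (\<lambda>x. \<not> P x) U"
  have "inf U (principal {x. P x}) \<noteq> bot"
    using n by (simp add: eventually_inf_principal trivial_limit_def)
  moreover have "inf U (principal {x. P x}) \<le> U" by simp
  ultimately have "inf U (principal {x. P x}) = U" using U unfolding ultrafilter_def by blast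
  have "eventually P (inf U (principal {x. P x}))" 
    by (simp add: eventually_inf_principal)
  then show "eventually P U" using \<open>inf U (principal {x. P x}) = U\<close> by simp
qed

lemma ultra_filtermap:
  assumes U: "ultrafilter U"
  shows "ultrafilter (filtermap f U)"
  unfolding ultrafilter_def
proof (intro conjI allI impI)
  show "filtermap f U \<noteq> bot" using U by (simp add: ultrafilter_def filtermap_bot_iff)
  fix G assume G: "G \<le> filtermap f U \<and> G \<noteq> bot"
  have "filtermap f U \<le> G"
  proof (rule filter_leI)
    fix P assume P: "eventually P G"
    show "eventually P (filtermap f U)"
    proof (rule ccontr)
      assume "\<not> eventually P (filtermap f U)"
      then have "eventually (\<lambda>x. \<not> P (f x)) U" using ultra_cases[OF U, of "\<lambda>x. P (f x)"]
        by (simp add: eventually_filtermap)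
      then have "eventually (\<lambda>x. \<not> P x) (filtermap f U)" by (simp add: eventually_filtermap)
      then have "eventually (\<lambda>x. \<not> P x) G" using G filter_leD by blast
      with P have "eventually (\<lambda>x. False) G" by (auto elim: eventually_elim2)
      then show False using G by (simp add: trivial_limit_def)
    qed
  qed
  then show "G = filtermap f U" using G by (simp add: antisym)
qed

lemma ultra_exists:
  fixes F :: "'a filter"
  assumes F: "F \<noteq> bot"
  shows "\<exists>U. ultrafilter U \<and> U \<le> F"
proof -
  define E where "E = (\<lambda>G::'a filter. {P. eventually P G})"
  have Einj: "E G1 \<subseteq> E G2 \<longleftrightarrow> G2 \<le> G1" for G1 G2
    by (auto simp: E_def le_filter_def)
  define A where "A = {E G | G. G \<le> F \<and> G \<noteq> bot}"
  have "\<exists>M\<in>A. \<forall>X\<in>A. M \<subseteq> X \<longrightarrow> X = M"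
  proof (rule Zorn_Lemma2, intro ballI)
    fix C assume C: "C \<in> chains A"
    show "\<exists>U\<in>A. \<forall>X\<in>C. X \<subseteq> U"
    proof (cases "C = {}")
      case True then show ?thesis using F by (auto simp: A_def)
    next
      case False
      define Gs where "Gs = {G. G \<le> F \<and> G \<noteq> bot \<and> E G \<in> C}"
      have CA: "C \<subseteq> A" using C by (auto simp: chains_def)
      have Gsne: "Gs \<noteq> {}" using False CA by (auto simp: Gs_def A_def)
      have dir: "\<exists>x\<in>Gs. x \<le> inf G1 G2" if "G1 \<in> Gs" "G2 \<in> Gs" for G1 G2
      proof -
        have "E G1 \<subseteq> E G2 \<or> E G2 \<subseteq> E G1" using C that by (auto simp: chains_def chain_subset_def Gs_def)
        then show ?thesis using that by (auto simp: Einj)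
      qed
      have ev: "eventually P (Inf Gs) \<longleftrightarrow> (\<exists>b\<in>Gs. eventually P b)" for P
        by (rule eventually_Inf_base[OF Gsne dir])
      have "Inf Gs \<noteq> bot"
        using ev[of "\<lambda>x. False"] by (auto simp: Gs_def trivial_limit_def)
      moreover have "Inf Gs \<le> F" using Gsne by (auto simp: Gs_def intro: Inf_lower2)
      ultimately have "E (Inf Gs) \<in> A" by (auto simp: A_def)
      moreover have "X \<subseteq> E (Inf Gs)" if XC: "X \<in> C" for X
      proof -
        obtain G where G: "X = E G" "G \<le> F" "G \<noteq> bot" using XC CA unfolding A_def by blast
        then have "G \<in> Gs" using XC by (auto simp: Gs_def)
        then show ?thesis using G ev by (auto simp: E_def)
      qed
      ultimately show ?thesis by blast
    qed
  qed
  then obtain M where M: "M \<in> A" "\<forall>X\<in>A. M \<subseteq> X \<longrightarrow> X = M" by blast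
  then obtain U where U0: "M = E U" "U \<le> F" "U \<noteq> bot" unfolding A_def by blast
  then have U: "U \<le> F" "U \<noteq> bot" by auto
  have max: "\<forall>X\<in>A. E U \<subseteq> X \<longrightarrow> X = E U" using M U0 by simp
  have "ultrafilter U" unfolding ultrafilter_def
  proof (intro conjI allI impI)
    show "U \<noteq> bot" by fact
    fix G assume G: "G \<le> U \<and> G \<noteq> bot"
    have GF: "G \<le> F" using G U(1) by (meson order_trans)
    have EGA: "E G \<in> A" unfolding A_def using GF G by blast
    have "E U \<subseteq> E G" using G Einj[of U G] by simp
    then have EE: "E G = E U" using max EGA by blast
    have "U \<le> G" using Einj[of G U] EE by simp
    then show "G = U" using G by (simp add: antisym)
  qed
  then show ?thesis using U(1) by blast
qed

lemma ultra_nhds: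
  fixes x :: "'a::topological_space"
  assumes U: "ultrafilter U" and "inf (nhds x) U \<noteq> bot"
  shows "U \<le> nhds x"
proof -
  have "\<forall>G. G \<le> U \<and> G \<noteq> bot \<longrightarrow> G = U" using U unfolding ultrafilter_def by blast
  then have "inf (nhds x) U = U" using assms(2) inf_le2 by blast
  then show ?thesis using inf_le1 by metis
qed

lemma ultra_compact:
  fixes S :: "'a::topological_space set"
  assumes U: "ultrafilter U" and S: "compact S" and ev: "eventually (\<lambda>x. x \<in> S) U"
  shows "\<exists>x\<in>S. U \<le> nhds x"
proof -
  have "U \<noteq> bot" using U by (simp add: ultrafilter_def)
  then obtain x where "x \<in> S" "inf (nhds x) U \<noteq> bot" using S ev unfolding compact_filter by blast
  then show ?thesis using ultra_nhds[OF U] by blast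
qed

lemma Tcirc_eq: "Tcirc = {z. cmod z = 1}"
proof
  show "Tcirc \<subseteq> {z. cmod z = 1}" by (auto simp: Tcirc_def rho_def)
  show "{z. cmod z = 1} \<subseteq> Tcirc"
  proof
    fix z :: complex assume "z \<in> {z. cmod z = 1}"
    then have z: "cmod z = 1" by simp
    then have "z \<noteq> 0" by auto
    have "sgn z = z" using z by (simp add: sgn_div_norm)
    then have "z = cis (Arg z)" using cis_Arg[OF \<open>z \<noteq> 0\<close>] by simp
    also have "\<dots> = rho (Arg z / (2*pi))" by (simp add: rho_def)
    finally show "z \<in> Tcirc" by (simp add: Tcirc_def)
  qed
qed

lemma cos_neg_aux: "pi/2 < x \<Longrightarrow> x < 3*pi/2 \<Longrightarrow> cos x < 0"
proof -
  assume a: "pi/2 < x" "x < 3*pi/2"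
  have "cos (x - pi) > 0" by (rule cos_gt_zero_pi) (use a in auto)
  moreover have "cos (x - pi) = - cos x" by (simp add: cos_diff)
  ultimately show ?thesis by simp
qed

lemma Tplus_eq: "Tplus = {z. cmod z = 1 \<and> Re z \<ge> 0}"
proof
  show "Tplus \<subseteq> {z. cmod z = 1 \<and> Re z \<ge> 0}"
  proof
    fix z assume "z \<in> Tplus"
    then obtain t where t: "t \<in> {-1/4..1/4}" "z = rho t" by (auto simp: Tplus_def)
    have m1: "2*pi*(-1/4) \<le> 2*pi*t" by (rule mult_left_mono) (use t in auto)
    have m2: "2*pi*t \<le> 2*pi*(1/4)" by (rule mult_left_mono) (use t in auto)
    have "0 \<le> cos (2*pi*t)" by (rule cos_ge_zero) (use m1 m2 in auto)
    then show "z \<in> {z. cmod z = 1 \<and> Re z \<ge> 0}" using t by (simp add: rho_def)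
  qed
  show "{z. cmod z = 1 \<and> Re z \<ge> 0} \<subseteq> Tplus"
  proof
    fix z :: complex assume "z \<in> {z. cmod z = 1 \<and> Re z \<ge> 0}"
    then have z: "cmod z = 1" "Re z \<ge> 0" by auto
    then have "z \<noteq> 0" by auto
    have "sgn z = z" using z by (simp add: sgn_div_norm)
    then have zc: "z = cis (Arg z)" using cis_Arg[OF \<open>z \<noteq> 0\<close>] by simp
    have b: "- pi < Arg z" "Arg z \<le> pi" using Arg_bounded by auto
    have c: "cos (Arg z) \<ge> 0" using z zc by (metis cis.sel(1))
    have "\<bar>Arg z\<bar> \<le> pi/2"
    proof (rule ccontr)
      assume "\<not> \<bar>Arg z\<bar> \<le> pi/2"
      then have "pi/2 < \<bar>Arg z\<bar>" "\<bar>Arg z\<bar> < 3*pi/2" using b by auto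
      then have "cos \<bar>Arg z\<bar> < 0" by (rule cos_neg_aux)
      then show False using c by (simp add: abs_if split: if_splits)
    qed
    then have "Arg z / (2*pi) \<in> {-1/4..1/4}" by (auto simp: field_simps abs_if split: if_splits)
    moreover have "z = rho (Arg z / (2*pi))" using zc by (simp add: rho_def)
    ultimately show "z \<in> Tplus" by (auto simp: Tplus_def)
  qed
qed

lemma arith_circle:
  fixes z :: complex
  assumes z: "cmod z = 1" and n: "n \<ge> 1" and h: "\<forall>k\<in>{1..n}. Re (z ^ k) \<ge> 0"
  shows "\<bar>Arg z\<bar> \<le> pi / (2 * real n)"
proof (rule ccontr)
  assume nt: "\<not> ?thesis"
  define t where "t = \<bar>Arg z\<bar>"
  have tpos: "pi / (2 * real n) < t" using nt t_def by simp
  have "pi / (2 * real n) > 0" using n by simp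
  then have t0: "t > 0" using tpos by linarith
  have tpi: "t \<le> pi" using Arg_bounded[of z] t_def by auto
  have "z \<noteq> 0" using z by auto
  have "sgn z = z" using z by (simp add: sgn_div_norm)
  then have zc: "z = cis (Arg z)" using cis_Arg[OF \<open>z \<noteq> 0\<close>] by simp
  have cosk: "Re (z ^ k) = cos (real k * t)" for k
  proof -
    have "z^k = cis (real k * Arg z)" using zc Complex.DeMoivre by metis
    then have "Re (z^k) = cos (real k * Arg z)" by simp
    also have "\<dots> = cos (real k * t)" by (simp add: t_def abs_if)
    finally show ?thesis .
  qed
  define q where "q = pi / (2 * t)"
  have q0: "q \<ge> 0" using t0 by (simp add: q_def)
  define k where "k = nat \<lfloor>q\<rfloor> + 1"
  have fl: "real (nat \<lfloor>q\<rfloor>) = of_int \<lfloor>q\<rfloor>" using q0 by simp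
  have k1: "real k - 1 \<le> q" "q < real k" using fl by (auto simp: k_def) linarith+
  have qn: "q < real n" using tpos n t0 by (simp add: q_def field_simps)
  have "k \<le> n"
  proof -
    have "of_int \<lfloor>q\<rfloor> < real n" using qn by linarith
    then have "nat \<lfloor>q\<rfloor> < n" using fl by linarith
    then show ?thesis by (simp add: k_def)
  qed
  moreover have "k \<ge> 1" by (simp add: k_def)
  ultimately have "cos (real k * t) \<ge> 0" using h cosk by auto
  moreover have "pi/2 < real k * t"
  proof -
    have "pi/2 = q * t" using t0 by (simp add: q_def)
    also have "\<dots> < real k * t" using k1 t0 by simp
    finally show ?thesis .
  qed
  moreover have "real k * t < 3*pi/2"
  proof -
    have "(real k - 1) * t \<le> q * t" using k1 t0 by (simp add: mult_right_mono)
    also have "q * t = pi/2" using t0 by (simp add: q_def)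
    finally have a: "real k * t \<le> pi/2 + t" by (simp add: algebra_simps)
    show ?thesis
    proof (cases "t < pi")
      case True then show ?thesis using a by simp
    next
      case False
      then have "t = pi" using tpi by simp
      then have "q = 1/2" by (simp add: q_def)
      then have "k = 1" by (simp add: k_def)
      then show ?thesis using \<open>t = pi\<close> by simp
    qed
  qed
  ultimately show False using cos_neg_aux by fastforce
qed

lemma tendsto_fun_iff:
  fixes f :: "'x \<Rightarrow> 'a \<Rightarrow> 'b::topological_space"
  shows "(f \<longlongrightarrow> l) F \<longleftrightarrow> (\<forall>i. ((\<lambda>c. f c i) \<longlongrightarrow> l i) F)"
proof -
  have "(f \<longlongrightarrow> l) F \<longleftrightarrow> limitin (product_topology (\<lambda>i. euclidean) UNIV) f l F"
    by (simp add: euclidean_product_topology)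
  also have "\<dots> \<longleftrightarrow> (\<forall>i. ((\<lambda>c. f c i) \<longlongrightarrow> l i) F)"
    by (subst limitin_componentwise) simp
  finally show ?thesis .
qed

definition polar :: "'c::topological_ab_group_add set \<Rightarrow> ('c \<Rightarrow> complex) set" where
  "polar V = {\<phi> \<in> characters top_conv. \<phi> ` V \<subseteq> Tplus}"

lemma char_norm: "\<phi> \<in> characters conv \<Longrightarrow> cmod (\<phi> x) = 1"
  by (auto simp: characters_def Tcirc_eq)

lemma char_add: "\<phi> \<in> characters conv \<Longrightarrow> \<phi> (x + y) = \<phi> x * \<phi> y"
  by (auto simp: characters_def)

lemma char_zero: "\<phi> \<in> characters conv \<Longrightarrow> \<phi> 0 = 1"
proof -
  assume c: "\<phi> \<in> characters conv"
  have "\<phi> 0 = \<phi> 0 * \<phi> 0" using char_add[OF c, of 0 0] by simp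
  moreover have "\<phi> 0 \<noteq> 0" using char_norm[OF c, of 0] by auto
  ultimately show ?thesis by (metis mult_cancel_left2)
qed

lemma char_sum: "\<phi> \<in> characters conv \<Longrightarrow> \<phi> (\<Sum>i<k. x) = \<phi> x ^ k"
  by (induction k) (auto simp: char_zero char_add)

lemma cis_small:
  assumes "e > 0"
  shows "\<exists>d>0. \<forall>t. \<bar>t\<bar> < d \<longrightarrow> cmod (cis t - 1) < e"
proof -
  have "((\<lambda>t. cis t) \<longlongrightarrow> cis 0) (at (0::real))" by (intro tendsto_intros)
  then have "(cis \<longlongrightarrow> 1) (at 0)" by simp
  then obtain d where "d > 0" "\<forall>t. t \<noteq> 0 \<and> dist t 0 < d \<longrightarrow> dist (cis t) 1 < e"
    using assms unfolding tendsto_iff eventually_at by blast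
  then have "\<forall>t. \<bar>t\<bar> < d \<longrightarrow> cmod (cis t - 1) < e"
    using assms by (metis cis_zero diff_self dist_norm norm_zero real_norm_def diff_0_right)
  then show ?thesis using \<open>d > 0\<close> by blast
qed

lemma equi_polar:
  fixes V W :: "'c::topological_ab_group_add set"
  assumes W: "open W" "0 \<in> W" "W \<subseteq> V" and e: "e > 0"
  shows "\<exists>W'. open W' \<and> 0 \<in> W' \<and> (\<forall>\<phi>\<in>polar V. \<forall>w\<in>W'. cmod (\<phi> w - 1) < e)"
proof -
  obtain d where d: "d > 0" "\<forall>t. \<bar>t\<bar> < d \<longrightarrow> cmod (cis t - 1) < e" using cis_small[OF e] by blast
  obtain n :: nat where n: "pi / (2 * d) < real n" using reals_Archimedean2 by blast
  have "pi / (2 * d) > 0" using d by simp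
  then have n1: "n \<ge> 1" using n by (cases n) auto
  have nd: "pi / (2 * real n) < d" using n d n1 by (simp add: field_simps)
  define W' where "W' = (\<Inter>k\<in>{1..n}. (\<lambda>x. \<Sum>i<k. x) -` W)"
  have cont: "continuous_on UNIV (\<lambda>x::'c. \<Sum>i<k. x)" for k
    by (intro continuous_intros)
  have "open W'" unfolding W'_def
    using cont W(1) by (intro open_INT ballI open_vimage) auto
  moreover have "0 \<in> W'" using W(2) by (auto simp: W'_def)
  moreover have "cmod (\<phi> w - 1) < e" if ph: "\<phi> \<in> polar V" and w: "w \<in> W'" for \<phi> w
  proof -
    have ch: "\<phi> \<in> characters top_conv" and pV: "\<phi> ` V \<subseteq> Tplus" using ph by (auto simp: polar_def)
    let ?z = "\<phi> w"
    have z1: "cmod ?z = 1" using char_norm[OF ch] .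
    have "\<forall>k\<in>{1..n}. Re (?z ^ k) \<ge> 0"
    proof
      fix k assume k: "k \<in> {1..n}"
      have "(\<Sum>i<k. w) \<in> V" using w k W(3) by (auto simp: W'_def)
      then have "\<phi> (\<Sum>i<k. w) \<in> Tplus" using pV by auto
      then show "Re (?z ^ k) \<ge> 0" using char_sum[OF ch] by (simp add: Tplus_eq)
    qed
    then have "\<bar>Arg ?z\<bar> \<le> pi / (2 * real n)" using arith_circle[OF z1 n1] by blast
    then have "\<bar>Arg ?z\<bar> < d" using nd by linarith
    then have "cmod (cis (Arg ?z) - 1) < e" using d by blast
    moreover have "?z \<noteq> 0" using z1 by auto
    moreover have "sgn ?z = ?z" using z1 by (simp add: sgn_div_norm)
    ultimately show ?thesis using cis_Arg by metis
  qed
  ultimately show ?thesis by blast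
qed

lemma char_of_limit:
  fixes \<psi> :: "'c::topological_ab_group_add \<Rightarrow> complex"
  assumes n: "\<forall>x. cmod (\<psi> x) = 1" and m: "\<forall>x y. \<psi> (x + y) = \<psi> x * \<psi> y"
    and b: "\<forall>e>0. \<exists>W'. open W' \<and> 0 \<in> W' \<and> (\<forall>w\<in>W'. cmod (\<psi> w - 1) \<le> e)"
  shows "\<psi> \<in> characters top_conv"
proof -
  have lim: "(\<psi> \<longlongrightarrow> \<psi> x) (nhds x)" for x
  proof (rule tendstoI)
    fix e :: real assume e: "e > 0"
    then obtain W' where W': "open W'" "0 \<in> W'" "\<forall>w\<in>W'. cmod (\<psi> w - 1) \<le> e/2"
      using b by (meson half_gt_zero)
    have "((\<lambda>y. y - x) \<longlongrightarrow> x - x) (nhds x)" by (intro tendsto_diff filterlim_ident tendsto_const)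
    then have "eventually (\<lambda>y. y - x \<in> W') (nhds x)"
      using topological_tendstoD W'(1,2) by fastforce
    then show "eventually (\<lambda>y. dist (\<psi> y) (\<psi> x) < e) (nhds x)"
    proof (rule eventually_mono)
      fix y assume y: "y - x \<in> W'"
      have "\<psi> y = \<psi> x * \<psi> (y - x)" using m by (metis add.commute diff_add_cancel)
      then have "dist (\<psi> y) (\<psi> x) = cmod (\<psi> x * (\<psi> (y - x) - 1))"
        by (simp add: dist_norm algebra_simps)
      also have "\<dots> = cmod (\<psi> (y - x) - 1)" using n by (simp add: norm_mult)
      also have "\<dots> \<le> e/2" using W' y by blast
      finally show "dist (\<psi> y) (\<psi> x) < e" using e by linarith
    qed
  qed
  have "conv_continuous top_conv top_conv \<psi>"
    unfolding conv_continuous_def top_conv_def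
  proof (intro allI impI)
    fix F :: "'c filter" and x assume "F \<le> nhds x"
    then have "filtermap \<psi> F \<le> filtermap \<psi> (nhds x)" by (rule filtermap_mono)
    also have "\<dots> \<le> nhds (\<psi> x)" using lim[of x] by (simp add: filterlim_def)
    finally show "filtermap \<psi> F \<le> nhds (\<psi> x)" .
  qed
  then show ?thesis using n m by (simp add: characters_def Tcirc_eq)
qed

lemma polar_limit:
  fixes V W :: "'c::topological_ab_group_add set"
  assumes U: "ultrafilter U" and ev: "eventually (\<lambda>\<phi>. \<phi> \<in> polar V) U"
    and W: "open W" "0 \<in> W" "W \<subseteq> V"
  shows "\<exists>\<psi>\<in>polar V. U \<le> nhds \<psi>"
proof -
  have Ub: "U \<noteq> bot" using U by (simp add: ultrafilter_def)
  have evc: "eventually (\<lambda>\<phi>. \<phi> \<in> characters top_conv) U"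
    using ev by (rule eventually_mono) (simp add: polar_def)
  have ex: "\<exists>z. ((\<lambda>\<phi>. \<phi> c) \<longlongrightarrow> z) U" for c
  proof -
    have u1: "ultrafilter (filtermap (\<lambda>\<phi>. \<phi> c) U)" by (rule ultra_filtermap[OF U])
    have "eventually (\<lambda>z. z \<in> sphere 0 1) (filtermap (\<lambda>\<phi>. \<phi> c) U)"
      unfolding eventually_filtermap using evc by (rule eventually_mono) (simp add: char_norm)
    then obtain z where "filtermap (\<lambda>\<phi>. \<phi> c) U \<le> nhds z"
      using ultra_compact[OF u1 compact_sphere] by blast
    then show ?thesis by (auto simp: filterlim_def)
  qed
  define \<psi> where "\<psi> c = (SOME z. ((\<lambda>\<phi>. \<phi> c) \<longlongrightarrow> z) U)" for c
  have lim: "((\<lambda>\<phi>. \<phi> c) \<longlongrightarrow> \<psi> c) U" for c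
    unfolding \<psi>_def using ex[of c] by (rule someI_ex)
  have "((\<lambda>\<phi>. \<phi>) \<longlongrightarrow> \<psi>) U" using lim by (subst tendsto_fun_iff) simp
  then have Ulim: "U \<le> nhds \<psi>" by (simp add: filterlim_def)
  have n: "\<forall>x. cmod (\<psi> x) = 1"
  proof
    fix x
    have A: "((\<lambda>\<phi>. cmod (\<phi> x)) \<longlongrightarrow> cmod (\<psi> x)) U" by (intro tendsto_intros lim)
    have "eventually (\<lambda>\<phi>. cmod (\<phi> x) = 1) U"
      using evc by (rule eventually_mono) (simp add: char_norm)
    then have B: "((\<lambda>\<phi>. cmod (\<phi> x)) \<longlongrightarrow> 1) U" by (rule tendsto_eventually)
    show "cmod (\<psi> x) = 1" by (rule tendsto_unique[OF Ub A B])
  qed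
  have m: "\<forall>x y. \<psi> (x + y) = \<psi> x * \<psi> y"
  proof (intro allI)
    fix x y
    have A: "((\<lambda>\<phi>. \<phi> x * \<phi> y) \<longlongrightarrow> \<psi> x * \<psi> y) U" by (intro tendsto_intros lim)
    have eq: "eventually (\<lambda>\<phi>. \<phi> x * \<phi> y = \<phi> (x + y)) U"
      using evc by (rule eventually_mono) (simp add: char_add)
    have B: "((\<lambda>\<phi>. \<phi> (x + y)) \<longlongrightarrow> \<psi> x * \<psi> y) U" by (rule iffD1[OF tendsto_cong[OF eq] A])
    show "\<psi> (x + y) = \<psi> x * \<psi> y" by (rule tendsto_unique[OF Ub lim B])
  qed
  have b: "\<forall>e>0. \<exists>W'. open W' \<and> 0 \<in> W' \<and> (\<forall>w\<in>W'. cmod (\<psi> w - 1) \<le> e)"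
  proof (intro allI impI)
    fix e :: real assume e: "e > 0"
    obtain W' where W': "open W'" "0 \<in> W'" "\<forall>\<phi>\<in>polar V. \<forall>w\<in>W'. cmod (\<phi> w - 1) < e"
      using equi_polar[OF W e] by blast
    have "cmod (\<psi> w - 1) \<le> e" if w: "w \<in> W'" for w
    proof (rule tendsto_upperbound)
      show "((\<lambda>\<phi>. cmod (\<phi> w - 1)) \<longlongrightarrow> cmod (\<psi> w - 1)) U" by (intro tendsto_intros lim)
      show "eventually (\<lambda>\<phi>. cmod (\<phi> w - 1) \<le> e) U"
        using ev by (rule eventually_mono) (use W'(3) w in \<open>meson less_imp_le\<close>)
      show "\<not> trivial_limit U" using Ub by simp
    qed
    then show "\<exists>W'. open W' \<and> 0 \<in> W' \<and> (\<forall>w\<in>W'. cmod (\<psi> w - 1) \<le> e)" using W' by blast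
  qed
  have ch: "\<psi> \<in> characters top_conv" by (rule char_of_limit[OF n m b])
  have "Re (\<psi> v) \<ge> 0" if v: "v \<in> V" for v
  proof (rule tendsto_lowerbound)
    show "((\<lambda>\<phi>. Re (\<phi> v)) \<longlongrightarrow> Re (\<psi> v)) U" by (intro tendsto_intros lim)
    show "eventually (\<lambda>\<phi>. 0 \<le> Re (\<phi> v)) U"
      using ev by (rule eventually_mono) (use v in \<open>auto simp: polar_def Tplus_eq\<close>)
    show "\<not> trivial_limit U" using Ub by simp
  qed
  then have "\<psi> ` V \<subseteq> Tplus" using n by (auto simp: Tplus_eq)
  then have "\<psi> \<in> polar V" using ch by (simp add: polar_def)
  then show ?thesis using Ulim by blast
qed

lemma conv_shift:
  assumes cg: "convergence_group conv" and F: "conv F x"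
  shows "conv (filtermap (\<lambda>y. y - x) F) 0"
proof -
  have c: "convergence conv" and g: "\<forall>F G x y. conv F x \<and> conv G y \<longrightarrow>
        conv (filtermap (\<lambda>(a, b). a - b) (F \<times>\<^sub>F G)) (x - y)"
    using cg by (auto simp: convergence_group_def)
  have "conv (principal {x}) x" using c by (simp add: convergence_def)
  then have "conv (filtermap (\<lambda>(a, b). a - b) (F \<times>\<^sub>F principal {x})) (x - x)" using g F by blast
  also have "filtermap (\<lambda>(a, b). a - b) (F \<times>\<^sub>F principal {x}) = filtermap (\<lambda>y. y - x) F"
    by (simp add: prod_filter_principal_singleton2 filtermap_filtermap)
  finally show ?thesis by simp
qed

lemma bihom_zero2: "bihomomorphism u \<Longrightarrow> u x 0 = 0"
proof -
  assume b: "bihomomorphism u"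
  have "u x (0 + 0) = u x 0 + u x 0" using b unfolding bihomomorphism_def by blast
  then show ?thesis by simp
qed

lemma bihom_zero1: "bihomomorphism u \<Longrightarrow> u 0 y = 0"
proof -
  assume b: "bihomomorphism u"
  have "u (0 + 0) y = u 0 y + u 0 y" using b unfolding bihomomorphism_def by blast
  then show ?thesis by simp
qed

lemma bihom_split2: "bihomomorphism u \<Longrightarrow> u x b = u x b0 + u x (b - b0)"
proof -
  assume b: "bihomomorphism u"
  have "u x (b0 + (b - b0)) = u x b0 + u x (b - b0)" using b unfolding bihomomorphism_def by blast
  then show ?thesis by simp
qed

lemma comp_char:
  fixes u :: "'a::ab_group_add \<Rightarrow> 'b::ab_group_add \<Rightarrow> 'c::topological_ab_group_add"
  assumes bih: "bihomomorphism u" and sc: "separately_continuous convG convH u"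
    and ph: "\<phi> \<in> characters top_conv"
  shows "(\<lambda>x. \<phi> (u x b)) \<in> characters convG"
proof -
  have c1: "conv_continuous convG top_conv (\<lambda>x. u x b)" using sc by (simp add: separately_continuous_def)
  have c2: "conv_continuous top_conv top_conv \<phi>" using ph by (simp add: characters_def)
  have "conv_continuous convG top_conv (\<lambda>x. \<phi> (u x b))"
    unfolding conv_continuous_def
  proof (intro allI impI)
    fix F x assume "convG F x"
    then have "top_conv (filtermap (\<lambda>x. u x b) F) (u x b)" using c1 by (simp add: conv_continuous_def)
    then have "top_conv (filtermap \<phi> (filtermap (\<lambda>x. u x b) F)) (\<phi> (u x b))"
      using c2 by (simp add: conv_continuous_def)
    then show "top_conv (filtermap (\<lambda>x. \<phi> (u x b)) F) (\<phi> (u x b))" by (simp add: filtermap_filtermap)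
  qed
  moreover have "\<forall>x. \<phi> (u x b) \<in> Tcirc" using ph by (simp add: characters_def)
  moreover have "\<forall>x y. \<phi> (u (x + y) b) = \<phi> (u x b) * \<phi> (u y b)"
    using bih ph by (simp add: bihomomorphism_def char_add)
  ultimately show ?thesis by (simp add: characters_def)
qed

lemma Mset_compact:
  fixes u :: "'a::ab_group_add \<Rightarrow> 'b::ab_group_add \<Rightarrow> 'c::topological_ab_group_add"
    and V W :: "'c set" and K :: "'b set"
  assumes cH: "convergence_group convH" and bih: "bihomomorphism u"
    and sc: "separately_continuous convG convH u"
    and W: "open W" "0 \<in> W" "W \<subseteq> V" and K: "conv_compact convH K"
  shows "compact ((\<lambda>(\<phi>, b). (\<lambda>x. \<phi> (u x b))) ` (polar V \<times> K))"
proof -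
  define g where "g = (\<lambda>(\<phi>::'c \<Rightarrow> complex, b). (\<lambda>x. \<phi> (u x b)))"
  define M where "M = g ` (polar V \<times> K)"
  have "compact M" unfolding compact_filter
  proof (intro allI impI)
    fix F assume Fb: "F \<noteq> bot" and evF: "eventually (\<lambda>f. f \<in> M) F"
    obtain U where U: "ultrafilter U" "U \<le> F" using ultra_exists[OF Fb] by blast
    have Ub: "U \<noteq> bot" using U by (simp add: ultrafilter_def)
    have evU: "eventually (\<lambda>f. f \<in> M) U" using evF U(2) by (rule filter_leD[rotated])
    define sel where "sel f = (SOME p. p \<in> polar V \<times> K \<and> f = g p)" for f
    have sel: "sel f \<in> polar V \<times> K \<and> f = g (sel f)" if "f \<in> M" for f
    proof -
      have "\<exists>p. p \<in> polar V \<times> K \<and> f = g p" using that by (auto simp: M_def)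
      then show ?thesis unfolding sel_def by (rule someI_ex)
    qed
    define B where "B = filtermap (\<lambda>f. snd (sel f)) U"
    have uB: "ultrafilter B" unfolding B_def by (rule ultra_filtermap[OF U(1)])
    have "eventually (\<lambda>b. b \<in> K) B" unfolding B_def eventually_filtermap
      using evU by (rule eventually_mono) (metis sel mem_Times_iff)
    then obtain b0 where b0: "b0 \<in> K" "convH B b0" using K uB by (auto simp: conv_compact_def)
    define P where "P = filtermap (\<lambda>f. fst (sel f)) U"
    have uP: "ultrafilter P" unfolding P_def by (rule ultra_filtermap[OF U(1)])
    have "eventually (\<lambda>\<phi>. \<phi> \<in> polar V) P" unfolding P_def eventually_filtermap
      using evU by (rule eventually_mono) (metis sel mem_Times_iff)
    then obtain \<psi> where \<psi>: "\<psi> \<in> polar V" "P \<le> nhds \<psi>" using polar_limit[OF uP _ W] by blast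
    define m0 where "m0 = g (\<psi>, b0)"
    have m0M: "m0 \<in> M" using \<psi>(1) b0(1) by (simp add: M_def m0_def)
    have "((\<lambda>f. f x) \<longlongrightarrow> m0 x) U" for x
    proof -
      have "((\<lambda>\<phi>. \<phi>) \<longlongrightarrow> \<psi>) P" using \<psi>(2) by (simp add: filterlim_def)
      then have "((\<lambda>\<phi>. \<phi> (u x b0)) \<longlongrightarrow> \<psi> (u x b0)) P" by (simp add: tendsto_fun_iff)
      then have T1: "((\<lambda>f. fst (sel f) (u x b0)) \<longlongrightarrow> \<psi> (u x b0)) U"
        by (simp add: P_def filterlim_filtermap)
      have T2: "((\<lambda>f. fst (sel f) (u x (snd (sel f) - b0))) \<longlongrightarrow> 1) U"
      proof (rule tendstoI)
        fix e :: real assume e: "e > 0"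
        obtain W' where W': "open W'" "0 \<in> W'" "\<forall>\<phi>\<in>polar V. \<forall>w\<in>W'. cmod (\<phi> w - 1) < e"
          using equi_polar[OF W e] by blast
        have "convH (filtermap (\<lambda>b. b - b0) B) 0" by (rule conv_shift[OF cH b0(2)])
        moreover have "conv_continuous convH top_conv (\<lambda>y. u x y)"
          using sc by (simp add: separately_continuous_def)
        ultimately have "top_conv (filtermap (\<lambda>y. u x y) (filtermap (\<lambda>b. b - b0) B)) (u x 0)"
          unfolding conv_continuous_def by blast
        then have "filtermap (u x) (filtermap (\<lambda>b. b - b0) B) \<le> nhds (u x 0)"
          by (simp add: top_conv_def)
        then have "filtermap (\<lambda>b. u x (b - b0)) B \<le> nhds 0"
          using bihom_zero2[OF bih] by (simp add: filtermap_filtermap)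
        moreover have "eventually (\<lambda>z. z \<in> W') (nhds 0)" by (rule eventually_nhds_in_open[OF W'(1,2)])
        ultimately have "eventually (\<lambda>z. z \<in> W') (filtermap (\<lambda>b. u x (b - b0)) B)" by (rule filter_leD)
        then have "eventually (\<lambda>b. u x (b - b0) \<in> W') B" by (simp add: eventually_filtermap)
        then have ev1: "eventually (\<lambda>f. u x (snd (sel f) - b0) \<in> W') U"
          by (simp add: B_def eventually_filtermap)
        show "eventually (\<lambda>f. dist (fst (sel f) (u x (snd (sel f) - b0))) 1 < e) U"
          using ev1 evU
        proof (rule eventually_elim2)
          fix f assume a: "u x (snd (sel f) - b0) \<in> W'" and "f \<in> M"
          then have "fst (sel f) \<in> polar V" using sel by force
          then show "dist (fst (sel f) (u x (snd (sel f) - b0))) 1 < e"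
            using W'(3) a by (simp add: dist_norm)
        qed
      qed
      have A: "((\<lambda>f. fst (sel f) (u x b0) * fst (sel f) (u x (snd (sel f) - b0))) \<longlongrightarrow> \<psi> (u x b0) * 1) U"
        by (rule tendsto_mult[OF T1 T2])
      have eq: "eventually (\<lambda>f. fst (sel f) (u x b0) * fst (sel f) (u x (snd (sel f) - b0)) = f x) U"
        using evU
      proof (rule eventually_mono)
        fix f assume "f \<in> M"
        then have s: "sel f \<in> polar V \<times> K" "f = g (sel f)" using sel by auto
        then have ch: "fst (sel f) \<in> characters top_conv" by (auto simp: polar_def)
        have "f x = fst (sel f) (u x (snd (sel f)))" using s(2) by (simp add: g_def split: prod.splits)
        also have "\<dots> = fst (sel f) (u x b0 + u x (snd (sel f) - b0))"
          using bihom_split2[OF bih] by metis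
        also have "\<dots> = fst (sel f) (u x b0) * fst (sel f) (u x (snd (sel f) - b0))"
          by (rule char_add[OF ch])
        finally show "fst (sel f) (u x b0) * fst (sel f) (u x (snd (sel f) - b0)) = f x" by simp
      qed
      have "((\<lambda>f. f x) \<longlongrightarrow> \<psi> (u x b0) * 1) U" by (rule iffD1[OF tendsto_cong[OF eq] A])
      then show ?thesis by (simp add: m0_def g_def)
    qed
    then have "((\<lambda>f. f) \<longlongrightarrow> m0) U" by (simp add: tendsto_fun_iff)
    then have "U \<le> nhds m0" by (simp add: filterlim_def)
    then have "U \<le> inf (nhds m0) F" using U(2) by simp
    then have "inf (nhds m0) F \<noteq> bot" using Ub by (metis bot.extremum_uniqueI)
    then show "\<exists>x\<in>M. inf (nhds x) F \<noteq> bot" using m0M by blast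
  qed
  then show ?thesis by (simp add: M_def g_def)
qed

lemma key:
  fixes u :: "'a::ab_group_add \<Rightarrow> 'b::ab_group_add \<Rightarrow> 'c::topological_ab_group_add"
    and V W :: "'c set" and K :: "'b set"
  assumes cH: "convergence_group convH" and gb: "g_barrelled convG" and bih: "bihomomorphism u"
    and sc: "separately_continuous convG convH u"
    and W: "open W" "0 \<in> W" "W \<subseteq> V" and qc: "quasi_convex V"
    and K: "conv_compact convH K" and A: "convG A 0"
  shows "eventually (\<lambda>a. \<forall>b\<in>K. u a b \<in> V) A"
proof -
  define M where "M = (\<lambda>(\<phi>, b). (\<lambda>x. \<phi> (u x b))) ` (polar V \<times> K)"
  have cM: "compact M" unfolding M_def by (rule Mset_compact[OF cH bih sc W K])
  have sM: "M \<subseteq> characters convG"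
    unfolding M_def using comp_char[OF bih sc] by (auto simp: polar_def)
  have "equicontinuous convG M" using gb cM sM by (simp add: g_barrelled_def)
  then have le: "filtermap (\<lambda>(\<phi>, x). \<phi> x) (principal M \<times>\<^sub>F A) \<le> nhds 1"
    using A by (simp add: equicontinuous_def)
  have "eventually (\<lambda>z. z \<in> {z. Re z > 0}) (nhds (1::complex))"
    by (rule eventually_nhds_in_open[OF open_halfspace_Re_gt]) simp
  then have "eventually (\<lambda>z. z \<in> {z. Re z > 0}) (filtermap (\<lambda>(\<phi>, x). \<phi> x) (principal M \<times>\<^sub>F A))"
    using le by (rule filter_leD[rotated])
  then have "eventually (\<lambda>p. Re (fst p (snd p)) > 0) (principal M \<times>\<^sub>F A)"
    by (simp add: eventually_filtermap case_prod_beta)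
  then obtain Pf Pg where Pf: "eventually Pf (principal M)" and Pg: "eventually Pg A"
    and PP: "\<forall>f x. Pf f \<longrightarrow> Pg x \<longrightarrow> Re (f x) > 0"
    unfolding eventually_prod_filter by auto
  have PfM: "\<forall>f\<in>M. Pf f" using Pf by (simp add: eventually_principal)
  show ?thesis using Pg
  proof (rule eventually_mono)
    fix a assume a: "Pg a"
    show "\<forall>b\<in>K. u a b \<in> V"
    proof (intro ballI, rule ccontr)
      fix b assume b: "b \<in> K" and nV: "u a b \<notin> V"
      obtain \<phi> where ph: "\<phi> \<in> characters top_conv" "\<phi> ` V \<subseteq> Tplus" "\<phi> (u a b) \<notin> Tplus"
        using qc nV unfolding quasi_convex_def by blast
      have "\<phi> \<in> polar V" using ph by (simp add: polar_def)
      then have "(\<lambda>x. \<phi> (u x b)) \<in> M" using b by (force simp: M_def)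
      then have "Re (\<phi> (u a b)) > 0" using PfM PP a by blast
      moreover have "cmod (\<phi> (u a b)) = 1" by (rule char_norm[OF ph(1)])
      ultimately have "\<phi> (u a b) \<in> Tplus" by (simp add: Tplus_eq)
      then show False using ph(3) by blast
    qed
  qed
qed

lemma countable_base_dec:
  assumes "countable_base_filter F"
  shows "\<exists>D::nat \<Rightarrow> 'a set. (\<forall>n. eventually (\<lambda>x. x \<in> D n) F) \<and> (\<forall>m n. m \<le> n \<longrightarrow> D n \<subseteq> D m)
           \<and> (\<forall>P. eventually P F \<longrightarrow> (\<exists>n. \<forall>x\<in>D n. P x))"
proof -
  obtain Bs :: "'a set set" where cB: "countable Bs" and ev: "\<forall>P. eventually P F \<longleftrightarrow> (\<exists>b\<in>Bs. \<forall>x\<in>b. P x)"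
    using assms unfolding countable_base_filter_def by blast
  have ne: "Bs \<noteq> {}" using ev[rule_format, of "\<lambda>x. True"] by auto
  define e where "e = from_nat_into Bs"
  have eB: "e i \<in> Bs" for i using from_nat_into[OF ne] by (simp add: e_def)
  have rng: "range e = Bs" using ne cB by (simp add: e_def)
  define D where "D n = (\<Inter>i\<in>{..n}. e i)" for n
  have evD: "eventually (\<lambda>x. x \<in> D n) F" for n
  proof -
    have "\<forall>i\<in>{..n}. eventually (\<lambda>x. x \<in> e i) F" using ev eB by blast
    then have "eventually (\<lambda>x. \<forall>i\<in>{..n}. x \<in> e i) F" by (intro eventually_ball_finite) auto
    then show ?thesis by (simp add: D_def)
  qed
  moreover have "\<forall>m n. m \<le> n \<longrightarrow> D n \<subseteq> D m" by (auto simp: D_def)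
  moreover have "\<forall>P. eventually P F \<longrightarrow> (\<exists>n. \<forall>x\<in>D n. P x)"
  proof (intro allI impI)
    fix P assume "eventually P F"
    then obtain b where "b \<in> Bs" "\<forall>x\<in>b. P x" using ev by blast
    then obtain n where "e n = b" using rng by blast
    then have "\<forall>x\<in>D n. P x" using \<open>\<forall>x\<in>b. P x\<close> by (auto simp: D_def)
    then show "\<exists>n. \<forall>x\<in>D n. P x" by blast
  qed
  ultimately show ?thesis by blast
qed

lemma seq_compact:
  fixes D :: "nat \<Rightarrow> 'a::zero set" and b :: "nat \<Rightarrow> 'a"
  assumes c: "convergence conv" and B: "conv B 0"
    and D: "\<forall>P. eventually P B \<longrightarrow> (\<exists>n. \<forall>x\<in>D n. P x)" and dec: "\<forall>m n. m \<le> n \<longrightarrow> D n \<subseteq> D m"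
    and b: "\<forall>n. b n \<in> D n"
  shows "conv_compact conv (insert 0 (range b))"
  unfolding conv_compact_def
proof (intro allI impI)
  let ?K = "insert 0 (range b)"
  fix U assume U: "ultrafilter U \<and> eventually (\<lambda>x. x \<in> ?K) U"
  show "\<exists>x\<in>?K. conv U x"
  proof (cases "\<exists>x\<in>?K. eventually (\<lambda>y. y \<in> {x}) U")
    case True
    then obtain x where x: "x \<in> ?K" "eventually (\<lambda>y. y \<in> {x}) U" by blast
    then have "U \<le> principal {x}" by (simp add: le_principal)
    moreover have "conv (principal {x}) x" using c by (simp add: convergence_def)
    ultimately have "conv U x" using c unfolding convergence_def by blast
    then show ?thesis using x by blast
  next
    case False
    then have nx: "eventually (\<lambda>y. y \<noteq> x) U" if "x \<in> ?K" for x
      using ultra_cases[of U "\<lambda>y. y \<in> {x}"] U that by auto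
    have "U \<le> B"
    proof (rule filter_leI)
      fix P assume "eventually P B"
      then obtain n where n: "\<forall>x\<in>D n. P x" using D by blast
      have "\<forall>i\<in>{..<n}. eventually (\<lambda>y. y \<noteq> b i) U" using nx by auto
      then have "eventually (\<lambda>y. \<forall>i\<in>{..<n}. y \<noteq> b i) U"
        by (simp add: eventually_ball_finite_distrib)
      moreover have "eventually (\<lambda>y. y \<noteq> 0) U" using nx by simp
      ultimately have "eventually (\<lambda>y. y \<in> ?K \<and> y \<noteq> 0 \<and> (\<forall>i\<in>{..<n}. y \<noteq> b i)) U"
        using U by (auto intro: eventually_conj)
      then show "eventually P U"
      proof (rule eventually_mono)
        fix y assume y: "y \<in> ?K \<and> y \<noteq> 0 \<and> (\<forall>i\<in>{..<n}. y \<noteq> b i)"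
        then obtain m where m: "y = b m" by auto
        then have "n \<le> m" using y by (metis lessThan_iff not_le)
        then have "y \<in> D n" using m b dec by blast
        then show "P y" using n by blast
      qed
    qed
    then have "conv U 0" using c B unfolding convergence_def by blast
    then show ?thesis by blast
  qed
qed

lemma bihom_expand:
  assumes b: "bihomomorphism u"
  shows "u x y = u x0 y0 + u (x - x0) y0 + u x0 (y - y0) + u (x - x0) (y - y0)"
proof -
  have h1: "\<forall>x x' y. u (x + x') y = u x y + u x' y" and h2: "\<forall>x y y'. u x (y + y') = u x y + u x y'"
    using b by (auto simp: bihomomorphism_def)
  have e1: "u x y = u x0 y + u (x - x0) y" using h1[rule_format, of x0 "x - x0" y] by simp
  have e2: "u x0 y = u x0 y0 + u x0 (y - y0)" using h2[rule_format, of x0 y0 "y - y0"] by simp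
  have e3: "u (x - x0) y = u (x - x0) y0 + u (x - x0) (y - y0)"
    using h2[rule_format, of "x - x0" y0 "y - y0"] by simp
  show ?thesis using e1 e2 e3 by (simp add: algebra_simps)
qed

lemma joint_from_core:
  fixes u :: "'a::ab_group_add \<Rightarrow> 'b::ab_group_add \<Rightarrow> 'c::topological_ab_group_add"
  assumes cG: "convergence_group convG" and cH: "convergence_group convH"
    and bih: "bihomomorphism u" and sc: "separately_continuous convG convH u"
    and core: "\<And>A B S. convG A 0 \<Longrightarrow> convH B 0 \<Longrightarrow> open S \<Longrightarrow> 0 \<in> S \<Longrightarrow>
                 eventually (\<lambda>p. u (fst p) (snd p) \<in> S) (A \<times>\<^sub>F B)"
  shows "jointly_continuous convG convH u"
  unfolding jointly_continuous_def conv_continuous_def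
proof (intro allI impI)
  fix P :: "('a \<times> 'b) filter" and p :: "'a \<times> 'b"
  assume "prod_conv convG convH P p"
  then have PG: "convG (filtermap fst P) (fst p)" and PH: "convH (filtermap snd P) (snd p)"
    by (auto simp: prod_conv_def)
  define x0 where "x0 = fst p"
  define y0 where "y0 = snd p"
  define A where "A = filtermap (\<lambda>q. fst q - x0) P"
  define B where "B = filtermap (\<lambda>q. snd q - y0) P"
  have A: "convG A 0" using conv_shift[OF cG PG] by (simp add: A_def x0_def filtermap_filtermap)
  have B: "convH B 0" using conv_shift[OF cH PH] by (simp add: B_def y0_def filtermap_filtermap)
  have t4: "((\<lambda>q. u (fst q - x0) (snd q - y0)) \<longlongrightarrow> 0) P"
  proof (rule topological_tendstoI)
    fix S :: "'c set" assume S: "open S" "0 \<in> S"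
    have ev: "eventually (\<lambda>p. u (fst p) (snd p) \<in> S) (A \<times>\<^sub>F B)" by (rule core[OF A B S])
    have "filterlim (\<lambda>q. fst q - x0) A P" by (simp add: filterlim_def A_def)
    moreover have "filterlim (\<lambda>q. snd q - y0) B P" by (simp add: filterlim_def B_def)
    ultimately have "filterlim (\<lambda>q. (fst q - x0, snd q - y0)) (A \<times>\<^sub>F B) P" by (rule filterlim_Pair)
    then have "eventually (\<lambda>p. u (fst p) (snd p) \<in> S) (filtermap (\<lambda>q. (fst q - x0, snd q - y0)) P)"
      using ev unfolding filterlim_def by (rule filter_leD)
    then show "eventually (\<lambda>q. u (fst q - x0) (snd q - y0) \<in> S) P" by (simp add: eventually_filtermap)
  qed
  have t2: "((\<lambda>q. u (fst q - x0) y0) \<longlongrightarrow> 0) P"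
  proof -
    have "conv_continuous convG top_conv (\<lambda>x. u x y0)" using sc by (simp add: separately_continuous_def)
    then have "top_conv (filtermap (\<lambda>x. u x y0) A) (u 0 y0)" using A unfolding conv_continuous_def by blast
    then show ?thesis by (simp add: top_conv_def A_def filtermap_filtermap filterlim_def bihom_zero1[OF bih])
  qed
  have t3: "((\<lambda>q. u x0 (snd q - y0)) \<longlongrightarrow> 0) P"
  proof -
    have "conv_continuous convH top_conv (\<lambda>y. u x0 y)" using sc by (simp add: separately_continuous_def)
    then have "top_conv (filtermap (\<lambda>y. u x0 y) B) (u x0 0)" using B unfolding conv_continuous_def by blast
    then show ?thesis by (simp add: top_conv_def B_def filtermap_filtermap filterlim_def bihom_zero2[OF bih])
  qed
  have "((\<lambda>q. u x0 y0 + u (fst q - x0) y0 + u x0 (snd q - y0) + u (fst q - x0) (snd q - y0))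
          \<longlongrightarrow> u x0 y0 + 0 + 0 + 0) P"
    by (intro tendsto_add tendsto_const t2 t3 t4)
  moreover have "(\<lambda>q. u x0 y0 + u (fst q - x0) y0 + u x0 (snd q - y0) + u (fst q - x0) (snd q - y0))
      = (\<lambda>(x, y). u x y)"
  proof
    fix q :: "'a \<times> 'b"
    show "u x0 y0 + u (fst q - x0) y0 + u x0 (snd q - y0) + u (fst q - x0) (snd q - y0) = (\<lambda>(x, y). u x y) q"
      using bihom_expand[OF bih, of "fst q" "snd q" x0 y0] by (simp add: case_prod_beta)
  qed
  ultimately have "((\<lambda>(x, y). u x y) \<longlongrightarrow> u x0 y0) P" by simp
  then show "top_conv (filtermap (\<lambda>(x, y). u x y) P) ((\<lambda>(x, y). u x y) p)"
    by (simp add: top_conv_def filterlim_def x0_def y0_def case_prod_beta)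
qed

lemma lqc_get:
  assumes "locally_quasi_convex TYPE('c::topological_ab_group_add)" "open (S::'c set)" "0 \<in> S"
  shows "\<exists>V W. open W \<and> 0 \<in> W \<and> W \<subseteq> V \<and> V \<subseteq> S \<and> quasi_convex V"
  using assms unfolding locally_quasi_convex_def by blast

lemma core_lc:
  fixes u :: "'a::ab_group_add \<Rightarrow> 'b::ab_group_add \<Rightarrow> 'c::topological_ab_group_add"
  assumes cH: "convergence_group convH" and gb: "g_barrelled convG" and bih: "bihomomorphism u"
    and sc: "separately_continuous convG convH u" and lqc: "locally_quasi_convex TYPE('c)"
    and lc: "conv_locally_compact convH"
    and A: "convG A 0" and B: "convH B 0" and S: "open S" "0 \<in> S"
  shows "eventually (\<lambda>p. u (fst p) (snd p) \<in> S) (A \<times>\<^sub>F B)"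
proof -
  from lqc_get[OF lqc S] obtain V where "\<exists>W. open W \<and> 0 \<in> W \<and> W \<subseteq> V \<and> V \<subseteq> S \<and> quasi_convex V" ..
  then obtain W where VWc: "open W \<and> 0 \<in> W \<and> W \<subseteq> V \<and> V \<subseteq> S \<and> quasi_convex V" ..
  have VW: "open W" "0 \<in> W" "W \<subseteq> V" "V \<subseteq> S" "quasi_convex V" using VWc by simp_all
  have "\<forall>F x. convH F x \<longrightarrow> (\<exists>K. conv_compact convH K \<and> eventually (\<lambda>y. y \<in> K) F)"
    using lc unfolding conv_locally_compact_def by (rule conjunct2)
  from this[rule_format, OF B] obtain K where Kc: "conv_compact convH K \<and> eventually (\<lambda>y. y \<in> K) B" ..
  have K: "conv_compact convH K" "eventually (\<lambda>y. y \<in> K) B" using Kc by simp_all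
  have ev: "eventually (\<lambda>a. \<forall>b\<in>K. u a b \<in> V) A"
    by (rule key[OF cH gb bih sc VW(1-3) VW(5) K(1) A])
  show ?thesis unfolding eventually_prod_filter
    by (rule exI[of _ "\<lambda>a. \<forall>b\<in>K. u a b \<in> V"], rule exI[of _ "\<lambda>y. y \<in> K"]) (use ev K(2) VW(4) in auto)
qed

lemma core_fc:
  fixes u :: "'a::ab_group_add \<Rightarrow> 'b::ab_group_add \<Rightarrow> 'c::topological_ab_group_add"
  assumes cH: "convergence_group convH" and gb: "g_barrelled convG" and bih: "bihomomorphism u"
    and sc: "separately_continuous convG convH u" and lqc: "locally_quasi_convex TYPE('c)"
    and fG: "conv_first_countable convG" and fH: "conv_first_countable convH"
    and A: "convG A 0" and B: "convH B 0" and S: "open S" "0 \<in> S"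
  shows "eventually (\<lambda>p. u (fst p) (snd p) \<in> S) (A \<times>\<^sub>F B)"
proof -
  from lqc_get[OF lqc S] obtain V where "\<exists>W. open W \<and> 0 \<in> W \<and> W \<subseteq> V \<and> V \<subseteq> S \<and> quasi_convex V" ..
  then obtain W where VWc: "open W \<and> 0 \<in> W \<and> W \<subseteq> V \<and> V \<subseteq> S \<and> quasi_convex V" ..
  have VW: "open W" "0 \<in> W" "W \<subseteq> V" "V \<subseteq> S" "quasi_convex V" using VWc by simp_all
  have "\<exists>A''. A \<le> A'' \<and> countable_base_filter A'' \<and> convG A'' 0"
    using fG[unfolded conv_first_countable_def, rule_format, OF A] .
  then obtain A' where A'c: "A \<le> A' \<and> countable_base_filter A' \<and> convG A' 0" ..
  have A': "A \<le> A'" "countable_base_filter A'" "convG A' 0" using A'c by auto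
  have "\<exists>B''. B \<le> B'' \<and> countable_base_filter B'' \<and> convH B'' 0"
    using fH[unfolded conv_first_countable_def, rule_format, OF B] .
  then obtain B' where B'c: "B \<le> B' \<and> countable_base_filter B' \<and> convH B' 0" ..
  have B': "B \<le> B'" "countable_base_filter B'" "convH B' 0" using B'c by auto
  from countable_base_dec[OF A'(2)] obtain DA :: "nat \<Rightarrow> 'a set" where DAc: "(\<forall>n. eventually (\<lambda>x. x \<in> DA n) A') \<and> (\<forall>m n. m \<le> n \<longrightarrow> DA n \<subseteq> DA m)
      \<and> (\<forall>P. eventually P A' \<longrightarrow> (\<exists>n. \<forall>x\<in>DA n. P x))" ..
  note DA = conjunct1[OF DAc] conjunct1[OF conjunct2[OF DAc]] conjunct2[OF conjunct2[OF DAc]]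
  from countable_base_dec[OF B'(2)] obtain DB :: "nat \<Rightarrow> 'b set" where DBc: "(\<forall>n. eventually (\<lambda>x. x \<in> DB n) B') \<and> (\<forall>m n. m \<le> n \<longrightarrow> DB n \<subseteq> DB m)
      \<and> (\<forall>P. eventually P B' \<longrightarrow> (\<exists>n. \<forall>x\<in>DB n. P x))" ..
  note DB = conjunct1[OF DBc] conjunct1[OF conjunct2[OF DBc]] conjunct2[OF conjunct2[OF DBc]]
  have main: "eventually (\<lambda>p. u (fst p) (snd p) \<in> V) (A' \<times>\<^sub>F B')"
  proof (rule ccontr)
    assume ne: "\<not> ?thesis"
    have "\<forall>n. \<exists>p. fst p \<in> DA n \<and> snd p \<in> DB n \<and> u (fst p) (snd p) \<notin> V"
    proof
      fix n show "\<exists>p. fst p \<in> DA n \<and> snd p \<in> DB n \<and> u (fst p) (snd p) \<notin> V"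
      proof (rule ccontr)
        assume "\<not> ?thesis"
        then have all: "\<forall>a b. a \<in> DA n \<longrightarrow> b \<in> DB n \<longrightarrow> u a b \<in> V" by auto
        have "eventually (\<lambda>p. u (fst p) (snd p) \<in> V) (A' \<times>\<^sub>F B')"
          unfolding eventually_prod_filter
          by (rule exI[of _ "\<lambda>x. x \<in> DA n"], rule exI[of _ "\<lambda>y. y \<in> DB n"]) (use DA(1) DB(1) all in auto)
        then show False using ne by blast
      qed
    qed
    from choice[OF this] obtain f where f: "\<forall>n. fst (f n) \<in> DA n \<and> snd (f n) \<in> DB n \<and> u (fst (f n)) (snd (f n)) \<notin> V"
      ..
    define b where "b n = snd (f n)" for n
    have cc: "convergence convH" using cH by (simp add: convergence_group_def)
    have Kc: "conv_compact convH (insert 0 (range b))"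
    proof (rule seq_compact[OF cc B'(3) DB(3) DB(2)])
      show "\<forall>n. b n \<in> DB n" unfolding b_def using f by blast
    qed
    have "eventually (\<lambda>a. \<forall>y\<in>insert 0 (range b). u a y \<in> V) A'"
      by (rule key[OF cH gb bih sc VW(1-3) VW(5) Kc A'(3)])
    from DA(3)[rule_format, OF this] obtain n where n: "\<forall>x\<in>DA n. \<forall>y\<in>insert 0 (range b). u x y \<in> V" ..
    have f1: "fst (f n) \<in> DA n" using f by blast
    have f2: "b n \<in> insert 0 (range b)" by simp
    have "u (fst (f n)) (b n) \<in> V" using n f1 f2 by blast
    then show False using f by (simp add: b_def)
  qed
  have "A \<times>\<^sub>F B \<le> A' \<times>\<^sub>F B'" by (rule prod_filter_mono[OF A'(1) B'(1)])
  then have "eventually (\<lambda>p. u (fst p) (snd p) \<in> V) (A \<times>\<^sub>F B)" using main by (rule filter_leD)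
  then show ?thesis by (rule eventually_mono) (use VW(4) in blast)
qed

theorem theorem3p3:
  fixes convG :: "'a::ab_group_add filter \<Rightarrow> 'a \<Rightarrow> bool"
    and convH :: "'b::ab_group_add filter \<Rightarrow> 'b \<Rightarrow> bool"
    and u :: "'a \<Rightarrow> 'b \<Rightarrow> 'c::topological_ab_group_add"
  assumes "convergence_group convG"
    and "convergence_group convH"
    and "g_barrelled convG"
    and "locally_quasi_convex TYPE('c)"
    and "bihomomorphism u"
    and "separately_continuous convG convH u"
  shows "(conv_locally_compact convH \<longrightarrow> jointly_continuous convG convH u) \<and>
         (conv_first_countable convG \<and> conv_first_countable convH \<longrightarrow>
            jointly_continuous convG convH u)"
proof (intro conjI impI)
  assume lc: "conv_locally_compact convH"
  show "jointly_continuous convG convH u"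
    by (rule joint_from_core[OF assms(1,2,5,6)]) (rule core_lc[OF assms(2,3,5,6,4) lc])
next
  assume fc: "conv_first_countable convG \<and> conv_first_countable convH"
  show "jointly_continuous convG convH u"
    by (rule joint_from_core[OF assms(1,2,5,6)])
       (rule core_fc[OF assms(2,3,5,6,4) conjunct1[OF fc] conjunct2[OF fc]])
qed

end
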